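(* Let $\mathcal{I}$ be a finite index set (sequence of such sets with $|\mathcal{I}|\to\infty$), and for $i\in\mathcal{I}$ let $X_i$ be mutually independent real random variables with finite fourth moments, variances $\sigma_i^2>0$ and kurtosis $\kappa_i$. For each $i$ let $X_i^{(1)},\dots,X_i^{(R_i)}$ be i.i.d. copies of $X_i$, independent of everything else, with sample mean $\bar X_i$ and sample variance $\hat\sigma_i^2=\frac{1}{R_i-1}\sum_{k=1}^{R_i}(X_i^{(k)}-\bar X_i)^2$. Let $X_{\mathcal{I}}=\sum_{i\in\mathcal{I}}X_i$, $\hat\mu_{\mathcal{I}}=\sum_{i\in\mathcal{I}}\bar X_i$, $\bar\sigma^2=\frac1{|\mathcal{I}|}\sum_{i}\sigma_i^2$, and $\gamma^2=\big(\frac1{|\mathcal{I}|}\sum_i\sigma_i^4-\bar\sigma^4\big)/\bar\sigma^4$. Assume (R1) $R_i\ge2$ for all $i\in\mathcal{I}$, the $R_i$ being fixed integers; (R2) $\kappa_i\le\kappa_{\max}$ for all $i$, with $\kappa_{\max}$ independent of $|\mathcal{I}|$; (R3) $\gamma^2$ is bounded as $|\mathcal{I}|\to\infty$. Then $\hat\sigma^2_{(X_{\mathcal{I}}-\hat\mu_{\mathcal{I}})}=\sum_{i\in\mathcal{I}}\hat\sigma_i^2(1+1/R_i)$ is an unbiased estimator of $\operatorname{Var}(X_{\mathcal{I}}-\hat\mu_{\mathcal{I}})$, and its variance is $O(|\mathcal{I}|\bar\sigma^4)$ as $|\mathcal{I}|\to\infty$.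
   Context: Kurtosis of $Y$ with variance $s^2$ is $\operatorname{E}[(Y-\operatorname{E}Y)^4]/s^4$. $f=O(g)$ means $f/g$ is eventually bounded. *)

theory Defs
  imports "HOL-Probability.Probability" "HOL-Library.Landau_Symbols"
begin

definition kurtosis :: "'a measure \<Rightarrow> ('a \<Rightarrow> real) \<Rightarrow> real" where
  "kurtosis M Y = (\<integral>x. (Y x - (\<integral>y. Y y \<partial>M)) ^ 4 \<partial>M) / (prob_space.variance M Y) ^ 2"

definition sample_mean :: "(nat \<Rightarrow> 'a \<Rightarrow> real) \<Rightarrow> nat \<Rightarrow> 'a \<Rightarrow> real" where
  "sample_mean Y R \<omega> = (\<Sum>k=1..R. Y k \<omega>) / real R"

definition sample_var :: "(nat \<Rightarrow> 'a \<Rightarrow> real) \<Rightarrow> nat \<Rightarrow> 'a \<Rightarrow> real" where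
  "sample_var Y R \<omega> = (\<Sum>k=1..R. (Y k \<omega> - sample_mean Y R \<omega>) ^ 2) / (real R - 1)"

text \<open>All random variables of one instance, jointly indexed: Inl i is X_i, Inr (i,k) is X_i^(k).\<close>
definition all_vars :: "('i \<Rightarrow> 'a \<Rightarrow> real) \<Rightarrow> ('i \<Rightarrow> nat \<Rightarrow> 'a \<Rightarrow> real) \<Rightarrow> 'i + ('i \<times> nat) \<Rightarrow> 'a \<Rightarrow> real" where
  "all_vars X Y j = (case j of Inl i \<Rightarrow> X i | Inr (i, k) \<Rightarrow> Y i k)"

definition all_index :: "'i set \<Rightarrow> ('i \<Rightarrow> nat) \<Rightarrow> ('i + ('i \<times> nat)) set" where
  "all_index I R = Inl ` I \<union> Inr ` (SIGMA i:I. {1..R i})"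

definition sigma_bar2 :: "'a measure \<Rightarrow> ('i \<Rightarrow> 'a \<Rightarrow> real) \<Rightarrow> 'i set \<Rightarrow> real" where
  "sigma_bar2 M X I = (\<Sum>i\<in>I. prob_space.variance M (X i)) / real (card I)"

definition gamma2 :: "'a measure \<Rightarrow> ('i \<Rightarrow> 'a \<Rightarrow> real) \<Rightarrow> 'i set \<Rightarrow> real" where
  "gamma2 M X I = ((\<Sum>i\<in>I. (prob_space.variance M (X i)) ^ 2) / real (card I)
                    - (sigma_bar2 M X I) ^ 2) / (sigma_bar2 M X I) ^ 2"

definition centred_sum :: "('i \<Rightarrow> 'a \<Rightarrow> real) \<Rightarrow> ('i \<Rightarrow> nat \<Rightarrow> 'a \<Rightarrow> real) \<Rightarrow> ('i \<Rightarrow> nat) \<Rightarrow> 'i set \<Rightarrow> 'a \<Rightarrow> real" where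
  "centred_sum X Y R I \<omega> = (\<Sum>i\<in>I. X i \<omega>) - (\<Sum>i\<in>I. sample_mean (Y i) (R i) \<omega>)"

definition var_estimator :: "('i \<Rightarrow> nat \<Rightarrow> 'a \<Rightarrow> real) \<Rightarrow> ('i \<Rightarrow> nat) \<Rightarrow> 'i set \<Rightarrow> 'a \<Rightarrow> real" where
  "var_estimator Y R I \<omega> = (\<Sum>i\<in>I. sample_var (Y i) (R i) \<omega> * (1 + 1 / real (R i)))"

end

theory Submission
  imports Defs
begin

definition sqi :: "'a measure \<Rightarrow> ('a \<Rightarrow> real) \<Rightarrow> bool" where
  "sqi M f \<longleftrightarrow> f \<in> borel_measurable M \<and> integrable M (\<lambda>x. (f x)^2)"

lemma sqi_mult:
  assumes "sqi M f" "sqi M g" shows "integrable M (\<lambda>x. f x * g x)"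
proof (rule Bochner_Integration.integrable_bound[where f="\<lambda>x. (f x)^2 + (g x)^2"])
  show "integrable M (\<lambda>x. (f x)^2 + (g x)^2)" using assms by (auto simp: sqi_def)
  show "(\<lambda>x. f x * g x) \<in> borel_measurable M" using assms by (auto simp: sqi_def)
  have "\<bar>a*b\<bar> \<le> a^2 + b^2" for a b :: real
  proof -
    have "0 \<le> (\<bar>a\<bar> - \<bar>b\<bar>)^2" by simp
    moreover have "(\<bar>a\<bar> - \<bar>b\<bar>)^2 = a^2 + b^2 - 2*(\<bar>a\<bar>*\<bar>b\<bar>)" by (simp add: power2_diff)
    moreover have "\<bar>a*b\<bar> = \<bar>a\<bar>*\<bar>b\<bar>" by (simp add: abs_mult)
    moreover have "0 \<le> \<bar>a\<bar>*\<bar>b\<bar>" by simp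
    ultimately show ?thesis by linarith
  qed
  then show "AE x in M. norm (f x * g x) \<le> norm ((f x)^2 + (g x)^2)" by auto
qed

lemma sqi_add: "sqi M f \<Longrightarrow> sqi M g \<Longrightarrow> sqi M (\<lambda>x. f x + g x)"
proof -
  assume a: "sqi M f" "sqi M g"
  have "integrable M (\<lambda>x. (f x)^2 + (g x)^2 + 2 * (f x * g x))"
    using a sqi_mult[OF a] unfolding sqi_def
    by (intro Bochner_Integration.integrable_add integrable_mult_right) auto
  moreover have "(\<lambda>x. (f x + g x)^2) = (\<lambda>x. (f x)^2 + (g x)^2 + 2 * (f x * g x))"
    by (auto simp: power2_sum)
  ultimately show ?thesis using a unfolding sqi_def by auto
qed

lemma sqi_cmult: "sqi M f \<Longrightarrow> sqi M (\<lambda>x. c * f x)"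
  unfolding sqi_def power_mult_distrib by auto

lemma sqi_minus: "sqi M f \<Longrightarrow> sqi M (\<lambda>x. - f x)"
  unfolding sqi_def by auto

lemma sqi_diff: "sqi M f \<Longrightarrow> sqi M g \<Longrightarrow> sqi M (\<lambda>x. f x - g x)"
  using sqi_add[of M f "\<lambda>x. - g x"] sqi_minus[of M g] by simp

lemma sqi_sum: "finite S \<Longrightarrow> (\<And>a. a \<in> S \<Longrightarrow> sqi M (f a)) \<Longrightarrow> sqi M (\<lambda>x. \<Sum>a\<in>S. f a x)"
proof (induction S rule: finite_induct)
  case empty then show ?case by (simp add: sqi_def)
next
  case (insert a S) then show ?case by (simp add: sqi_add)
qed

lemma (in finite_measure) sqi_const: "sqi M (\<lambda>x. c)"
  unfolding sqi_def by auto

lemma (in finite_measure) sqi_int: "sqi M f \<Longrightarrow> integrable M f"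
  unfolding sqi_def using square_integrable_imp_integrable by blast

lemma (in prob_space) cov_zero:
  assumes "indep_var borel U borel V" "sqi M U" "sqi M V"
  shows "(\<integral>x. (U x - expectation U) * (V x - expectation V) \<partial>M) = 0"
proof -
  have "indep_var borel ((\<lambda>t. t - expectation U) \<circ> U) borel ((\<lambda>t. t - expectation V) \<circ> V)"
    by (rule indep_var_compose[OF assms(1)]) auto
  then have i: "indep_var borel (\<lambda>x. U x - expectation U) borel (\<lambda>x. V x - expectation V)"
    by (simp add: comp_def)
  have iU: "integrable M U" "integrable M V" using assms sqi_int by auto
  have "(\<integral>x. (U x - expectation U) * (V x - expectation V) \<partial>M)
      = (\<integral>x. (U x - expectation U) \<partial>M) * (\<integral>x. (V x - expectation V) \<partial>M)"
    by (rule indep_var_lebesgue_integral[OF i]) (use iU in auto)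
  also have "\<dots> = 0" using iU by (simp add: prob_space)
  finally show ?thesis .
qed

lemma (in prob_space) var_sum:
  fixes U :: "'b \<Rightarrow> 'a \<Rightarrow> real"
  assumes fin: "finite S" and sq: "\<And>a. a \<in> S \<Longrightarrow> sqi M (U a)"
    and ind: "\<And>a b. a \<in> S \<Longrightarrow> b \<in> S \<Longrightarrow> a \<noteq> b \<Longrightarrow> indep_var borel (U a) borel (U b)"
  shows "variance (\<lambda>x. \<Sum>a\<in>S. U a x) = (\<Sum>a\<in>S. variance (U a))"
proof -
  define c where "c a x = U a x - expectation (U a)" for a x
  have iU: "\<And>a. a \<in> S \<Longrightarrow> integrable M (U a)" using sq sqi_int by auto
  have sc: "\<And>a. a \<in> S \<Longrightarrow> sqi M (c a)" unfolding c_def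
    by (intro sqi_diff sq sqi_const)
  have e: "expectation (\<lambda>x. \<Sum>a\<in>S. U a x) = (\<Sum>a\<in>S. expectation (U a))"
    by (rule Bochner_Integration.integral_sum) (use iU in auto)
  have "variance (\<lambda>x. \<Sum>a\<in>S. U a x) = (\<integral>x. (\<Sum>a\<in>S. c a x)^2 \<partial>M)"
    unfolding e c_def by (simp add: sum_subtractf)
  also have "\<dots> = (\<integral>x. (\<Sum>a\<in>S. \<Sum>b\<in>S. c a x * c b x) \<partial>M)"
    by (simp add: power2_eq_square sum_product)
  also have "\<dots> = (\<Sum>a\<in>S. \<Sum>b\<in>S. (\<integral>x. c a x * c b x \<partial>M))"
    using sc by (simp add: sqi_mult Bochner_Integration.integral_sum)
  also have "\<dots> = (\<Sum>a\<in>S. \<Sum>b\<in>S. if a = b then variance (U a) else 0)"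
  proof (intro sum.cong refl)
    fix a b assume ab: "a \<in> S" "b \<in> S"
    show "(\<integral>x. c a x * c b x \<partial>M) = (if a = b then variance (U a) else 0)"
    proof (cases "a = b")
      case True then show ?thesis by (simp add: c_def power2_eq_square)
    next
      case False then show ?thesis
        using cov_zero[OF ind[OF ab False] sq sq] ab by (simp add: c_def)
    qed
  qed
  also have "\<dots> = (\<Sum>a\<in>S. variance (U a))"
    using fin by (simp add: sum.delta)
  finally show ?thesis .
qed

lemma (in prob_space) var_diff:
  assumes "indep_var borel U borel V" "sqi M U" "sqi M V"
  shows "variance (\<lambda>x. U x - V x) = variance U + variance V"
proof -
  have iU: "integrable M U" "integrable M V" using assms sqi_int by auto
  have e: "expectation (\<lambda>x. U x - V x) = expectation U - expectation V" using iU by simp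
  have sc: "sqi M (\<lambda>x. U x - expectation U)" "sqi M (\<lambda>x. V x - expectation V)"
    using assms by (auto intro!: sqi_diff sqi_const)
  have "variance (\<lambda>x. U x - V x) = (\<integral>x. (U x - expectation U)^2 + (V x - expectation V)^2
       - 2 * ((U x - expectation U) * (V x - expectation V)) \<partial>M)"
    unfolding e by (rule Bochner_Integration.integral_cong) (auto simp: power2_eq_square algebra_simps)
  also have "\<dots> = variance U + variance V - 2 * (\<integral>x. (U x - expectation U) * (V x - expectation V) \<partial>M)"
    using sc sqi_mult[OF sc(1) sc(2)] by (simp add: sqi_def)
  also have "\<dots> = variance U + variance V" using cov_zero[OF assms] by simp
  finally show ?thesis .
qed

lemma (in prob_space) var_cmult: fixes U :: "'a \<Rightarrow> real" shows "variance (\<lambda>x. c * U x) = c^2 * variance U"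
proof -
  have [simp]: "expectation (\<lambda>x. c * U x) = c * expectation U" by (rule integral_mult_right_zero)
  have "variance (\<lambda>x. c * U x) = (\<integral>x. c^2 * (U x - expectation U)^2 \<partial>M)"
    by (rule Bochner_Integration.integral_cong) (auto simp: power2_eq_square algebra_simps)
  then show ?thesis by simp
qed


lemma (in prob_space) L4:
  fixes f :: "'a \<Rightarrow> real"
  assumes fm: "f \<in> borel_measurable M" and f4: "integrable M (\<lambda>x. f x ^ 4)"
  shows "sqi M f" "integrable M (\<lambda>x. (f x - c) ^ 4)"
proof -
  have b1: "t^2 \<le> 1 + t^4" for t :: real
  proof -
    have "0 \<le> (t^2 - 1)^2" by simp
    moreover have "(t^2 - 1)^2 = t^4 - 2*t^2 + 1" by algebra
    moreover have "0 \<le> t^2" by simp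
    ultimately show ?thesis by linarith
  qed
  show "sqi M f" unfolding sqi_def
  proof
    show "integrable M (\<lambda>x. (f x)\<^sup>2)"
      by (rule Bochner_Integration.integrable_bound[where f="\<lambda>x. 1 + f x ^ 4"])
         (use f4 fm b1 in auto)
  qed (rule fm)
  have b2: "(a - b)^4 \<le> 8*a^4 + 8*b^4" for a b :: real
  proof -
    have e1: "2*a^2+2*b^2 - (a-b)^2 = (a+b)^2" by algebra
    have h1: "(a-b)^2 \<le> 2*a^2 + 2*b^2" using e1 zero_le_power2[of "a+b"] by linarith
    have h2: "((a-b)^2)^2 \<le> (2*a^2+2*b^2)^2" by (rule power_mono[OF h1]) simp
    have e3: "8*a^4 + 8*b^4 - (2*a^2+2*b^2)^2 = 4*(a^2-b^2)^2" by algebra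
    have h3: "(2*a^2+2*b^2)^2 \<le> 8*a^4 + 8*b^4" using e3 zero_le_power2[of "a^2-b^2"] by linarith
    have "(a-b)^4 = ((a-b)^2)^2" by algebra
    then show ?thesis using h2 h3 by linarith
  qed
  show "integrable M (\<lambda>x. (f x - c) ^ 4)"
  proof (rule Bochner_Integration.integrable_bound[where f="\<lambda>x. 8 * f x ^ 4 + 8 * c ^ 4"])
    show "integrable M (\<lambda>x. 8 * f x ^ 4 + 8 * c ^ 4)" using f4 by auto
    show "(\<lambda>x. (f x - c) ^ 4) \<in> borel_measurable M" using fm by auto
    have "0 \<le> (t::real)^4" for t by simp
    then show "AE x in M. norm ((f x - c) ^ 4) \<le> norm (8 * f x ^ 4 + 8 * c ^ 4)"
      using b2 by (auto intro!: AE_I2 simp: abs_of_nonneg add_nonneg_nonneg)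
  qed
qed

lemma (in prob_space) dist_transfer:
  fixes U V :: "'a \<Rightarrow> real" and g :: "real \<Rightarrow> real"
  assumes d: "distr M borel U = distr M borel V" and [measurable]: "U \<in> borel_measurable M" "V \<in> borel_measurable M"
    and g[measurable]: "g \<in> borel_measurable borel"
  shows "integrable M (\<lambda>x. g (U x)) \<longleftrightarrow> integrable M (\<lambda>x. g (V x))"
    "(\<integral>x. g (U x) \<partial>M) = (\<integral>x. g (V x) \<partial>M)"
proof -
  show "integrable M (\<lambda>x. g (U x)) \<longleftrightarrow> integrable M (\<lambda>x. g (V x))"
    using integrable_distr_eq[of U M borel g] integrable_distr_eq[of V M borel g] d by simp
  show "(\<integral>x. g (U x) \<partial>M) = (\<integral>x. g (V x) \<partial>M)"
    using integral_distr[of U M borel g] integral_distr[of V M borel g] d by simp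
qed

lemma (in prob_space) indep_blocks:
  assumes "indep_vars (\<lambda>_. borel) Z J" "A \<inter> B = {}" "A \<subseteq> J" "B \<subseteq> J"
   "f \<in> borel_measurable (PiM A (\<lambda>_. borel))" "g \<in> borel_measurable (PiM B (\<lambda>_. borel))"
  shows "indep_var borel (\<lambda>\<omega>. f (restrict (\<lambda>j. Z j \<omega>) A)) borel (\<lambda>\<omega>. g (restrict (\<lambda>j. Z j \<omega>) B))"
  using indep_var_compose[OF indep_var_restrict[OF assms(1-4)] assms(5,6)] by (simp add: comp_def)

lemma sv_alt:
  assumes "R \<ge> 2"
  shows "sample_var Y R \<omega> = ((\<Sum>k=1..R. (Y k \<omega> - m)^2) - real R * (sample_mean Y R \<omega> - m)^2) / (real R - 1)"
proof -
  define yb where "yb = sample_mean Y R \<omega>"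
  have R0: "real R > 0" using assms by simp
  have s: "(\<Sum>k=1..R. (Y k \<omega> - m)) = real R * (yb - m)"
    using R0 by (simp add: yb_def sample_mean_def sum_subtractf algebra_simps)
  have "(\<Sum>k=1..R. (Y k \<omega> - yb)^2) = (\<Sum>k=1..R. (Y k \<omega> - m)^2 - 2*(yb-m)*(Y k \<omega> - m) + (yb-m)^2)"
    by (intro sum.cong) (auto simp: power2_eq_square algebra_simps)
  also have "\<dots> = (\<Sum>k=1..R. (Y k \<omega> - m)^2) - 2*(yb-m)*(\<Sum>k=1..R. (Y k \<omega> - m)) + real R*(yb-m)^2"
    by (simp add: sum.distrib sum_subtractf flip: sum_distrib_left)
  also have "\<dots> = (\<Sum>k=1..R. (Y k \<omega> - m)^2) - real R*(yb-m)^2"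
    unfolding s by (simp add: power2_eq_square algebra_simps)
  finally show ?thesis by (simp add: sample_var_def yb_def)
qed

lemma sv_nonneg: "R \<ge> 2 \<Longrightarrow> sample_var Y R \<omega> \<ge> 0"
  unfolding sample_var_def by (intro divide_nonneg_nonneg sum_nonneg) auto

lemma sv_sq_bound:
  assumes R: "R \<ge> 2"
  shows "(sample_var Y R \<omega>)^2 \<le> real R / (real R - 1)^2 * (\<Sum>k=1..R. (Y k \<omega> - m)^4)"
proof -
  define S where "S = (\<Sum>k=1..R. (Y k \<omega> - m)^2)"
  have R1: "real R - 1 > 0" using R by simp
  have le: "sample_var Y R \<omega> \<le> S / (real R - 1)"
    unfolding sv_alt[OF R, of Y \<omega> m] S_def using R1
    by (intro divide_right_mono) auto
  have "(sample_var Y R \<omega>)^2 \<le> (S / (real R - 1))^2"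
    by (rule power_mono[OF le sv_nonneg[OF R]])
  also have "\<dots> = S^2 / (real R - 1)^2" by (simp add: power_divide)
  also have "S^2 \<le> real R * (\<Sum>k=1..R. (Y k \<omega> - m)^4)"
  proof -
    have "S^2 = (\<Sum>k=1..R. 1 * (Y k \<omega> - m)^2)^2" by (simp add: S_def)
    also have "\<dots> \<le> (\<Sum>k=1..R. 1^2) * (\<Sum>k=1..R. ((Y k \<omega> - m)^2)^2)"
      by (rule Cauchy_Schwarz_ineq_sum)
    also have "\<dots> = real R * (\<Sum>k=1..R. (Y k \<omega> - m)^4)"
      by (simp flip: power_mult)
    finally show ?thesis .
  qed
  then have "S^2 / (real R - 1)^2 \<le> real R * (\<Sum>k=1..R. (Y k \<omega> - m)^4) / (real R - 1)^2"
    by (intro divide_right_mono) auto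
  finally show ?thesis by simp
qed


locale setting = prob_space M for M :: "'a measure" +
  fixes I :: "'i set" and X :: "'i \<Rightarrow> 'a \<Rightarrow> real" and Y :: "'i \<Rightarrow> nat \<Rightarrow> 'a \<Rightarrow> real"
    and R :: "'i \<Rightarrow> nat"
  assumes fin: "finite I"
    and fourth: "\<And>i. i \<in> I \<Longrightarrow> integrable M (\<lambda>\<omega>. (X i \<omega>) ^ 4)"
    and copies: "\<And>i k. i \<in> I \<Longrightarrow> k \<in> {1..R i} \<Longrightarrow> distr M borel (Y i k) = distr M borel (X i)"
    and indep: "indep_vars (\<lambda>_. borel) (all_vars X Y) (all_index I R)"
    and R1: "\<And>i. i \<in> I \<Longrightarrow> R i \<ge> 2"
begin

abbreviation "Z \<equiv> all_vars X Y"
abbreviation "J \<equiv> all_index I R"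

lemma Zmeas: "j \<in> J \<Longrightarrow> Z j \<in> borel_measurable M"
  using indep unfolding indep_vars_def by auto

lemma Xmeas: "i \<in> I \<Longrightarrow> X i \<in> borel_measurable M"
  using Zmeas[of "Inl i"] by (simp add: all_index_def all_vars_def)

lemma Ymeas: "i \<in> I \<Longrightarrow> k \<in> {1..R i} \<Longrightarrow> Y i k \<in> borel_measurable M"
  using Zmeas[of "Inr (i,k)"] by (simp add: all_index_def all_vars_def)

lemma Ytrans:
  fixes g :: "real \<Rightarrow> real"
  assumes "i \<in> I" "k \<in> {1..R i}" "g \<in> borel_measurable borel"
  shows "integrable M (\<lambda>x. g (Y i k x)) \<longleftrightarrow> integrable M (\<lambda>x. g (X i x))"
    "(\<integral>x. g (Y i k x) \<partial>M) = (\<integral>x. g (X i x) \<partial>M)"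
  using dist_transfer[OF copies[OF assms(1,2)] Ymeas[OF assms(1,2)] Xmeas[OF assms(1)] assms(3)] by auto

lemma Y4: "i \<in> I \<Longrightarrow> k \<in> {1..R i} \<Longrightarrow> integrable M (\<lambda>\<omega>. (Y i k \<omega>) ^ 4)"
  using Ytrans[of i k "\<lambda>t. t^4"] fourth by auto

lemma Xsqi: "i \<in> I \<Longrightarrow> sqi M (X i)"
  using L4(1)[OF Xmeas fourth] .

lemma Ysqi: "i \<in> I \<Longrightarrow> k \<in> {1..R i} \<Longrightarrow> sqi M (Y i k)"
  using L4(1)[OF Ymeas Y4] .

lemma Ymean: "i \<in> I \<Longrightarrow> k \<in> {1..R i} \<Longrightarrow> expectation (Y i k) = expectation (X i)"
  using Ytrans(2)[of i k "\<lambda>t. t"] by auto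

lemma Yc2: "i \<in> I \<Longrightarrow> k \<in> {1..R i} \<Longrightarrow>
   (\<integral>x. (Y i k x - c)^2 \<partial>M) = (\<integral>x. (X i x - c)^2 \<partial>M)"
  using Ytrans(2)[of i k "\<lambda>t. (t - c)^2"] by auto

lemma Yvar: "i \<in> I \<Longrightarrow> k \<in> {1..R i} \<Longrightarrow> variance (Y i k) = variance (X i)"
  using Yc2 Ymean by simp

lemma Yc4: "i \<in> I \<Longrightarrow> k \<in> {1..R i} \<Longrightarrow>
   (\<integral>x. (Y i k x - c)^4 \<partial>M) = (\<integral>x. (X i x - c)^4 \<partial>M)"
  using Ytrans(2)[of i k "\<lambda>t. (t - c)^4"] by auto

lemma indep_single: "j \<in> J \<Longrightarrow> j' \<in> J \<Longrightarrow> j \<noteq> j' \<Longrightarrow> indep_var borel (Z j) borel (Z j')"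
  using indep_blocks[OF indep, of "{j}" "{j'}" "\<lambda>h. h j" "\<lambda>h. h j'"]
  by (simp add: measurable_component_singleton)

lemma indep_YY: "i \<in> I \<Longrightarrow> k \<in> {1..R i} \<Longrightarrow> k' \<in> {1..R i} \<Longrightarrow> k \<noteq> k' \<Longrightarrow>
   indep_var borel (Y i k) borel (Y i k')"
  using indep_single[of "Inr (i,k)" "Inr (i,k')"] by (simp add: all_index_def all_vars_def)

definition "Kb i = insert (Inl i) (Inr ` ({i} \<times> {1..R i}))"

lemma Kb_sub: "i \<in> I \<Longrightarrow> Kb i \<subseteq> J"
  by (auto simp: Kb_def all_index_def)

lemma Kb_disj: "i \<noteq> i' \<Longrightarrow> Kb i \<inter> Kb i' = {}"
  by (auto simp: Kb_def)

definition "fW i h = h (Inl i) - (\<Sum>k=1..R i. h (Inr (i,k))) / real (R i)"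
definition "fT i h = sample_var (\<lambda>k h. h (Inr (i,k))) (R i) h * (1 + 1 / real (R i))"

lemma fW_meas: "fW i \<in> borel_measurable (PiM (Kb i) (\<lambda>_. borel))"
  unfolding fW_def
  by (intro borel_measurable_diff borel_measurable_divide borel_measurable_sum measurable_component_singleton borel_measurable_const)
     (auto simp: Kb_def)

lemma fT_meas: "fT i \<in> borel_measurable (PiM (Kb i) (\<lambda>_. borel))"
  unfolding fT_def sample_var_def sample_mean_def
  by (intro borel_measurable_diff borel_measurable_divide borel_measurable_sum borel_measurable_times
       borel_measurable_power measurable_component_singleton borel_measurable_const)
     (auto simp: Kb_def)

lemma W_eq: "i \<in> I \<Longrightarrow> (\<lambda>\<omega>. X i \<omega> - sample_mean (Y i) (R i) \<omega>) = (\<lambda>\<omega>. fW i (restrict (\<lambda>j. Z j \<omega>) (Kb i)))"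
  by (auto simp: fun_eq_iff fW_def sample_mean_def Kb_def all_vars_def intro!: sum.cong)

lemma T_eq: "i \<in> I \<Longrightarrow> (\<lambda>\<omega>. sample_var (Y i) (R i) \<omega> * (1 + 1 / real (R i))) = (\<lambda>\<omega>. fT i (restrict (\<lambda>j. Z j \<omega>) (Kb i)))"
  by (auto simp: fun_eq_iff fT_def sample_var_def sample_mean_def Kb_def all_vars_def intro!: sum.cong)


lemma block_meas: "i \<in> I \<Longrightarrow> h \<in> borel_measurable (PiM (Kb i) (\<lambda>_. borel)) \<Longrightarrow>
   (\<lambda>\<omega>. h (restrict (\<lambda>j. Z j \<omega>) (Kb i))) \<in> borel_measurable M"
  by (rule measurable_compose[OF measurable_restrict]) (use Zmeas Kb_sub in auto)

definition "W i \<omega> = X i \<omega> - sample_mean (Y i) (R i) \<omega>"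
definition "T i \<omega> = sample_var (Y i) (R i) \<omega> * (1 + 1 / real (R i))"

lemma W_eq': "i \<in> I \<Longrightarrow> W i = (\<lambda>\<omega>. fW i (restrict (\<lambda>j. Z j \<omega>) (Kb i)))"
  using W_eq by (simp add: W_def[abs_def])

lemma T_eq': "i \<in> I \<Longrightarrow> T i = (\<lambda>\<omega>. fT i (restrict (\<lambda>j. Z j \<omega>) (Kb i)))"
  using T_eq by (simp add: T_def[abs_def])

lemma indep_W: "i \<in> I \<Longrightarrow> i' \<in> I \<Longrightarrow> i \<noteq> i' \<Longrightarrow> indep_var borel (W i) borel (W i')"
  unfolding W_eq'
  using indep_blocks[OF indep Kb_disj Kb_sub Kb_sub fW_meas fW_meas] by simp

lemma indep_T: "i \<in> I \<Longrightarrow> i' \<in> I \<Longrightarrow> i \<noteq> i' \<Longrightarrow> indep_var borel (T i) borel (T i')"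
  unfolding T_eq'
  using indep_blocks[OF indep Kb_disj Kb_sub Kb_sub fT_meas fT_meas] by simp

lemma Tmeas: "i \<in> I \<Longrightarrow> T i \<in> borel_measurable M"
  by (subst T_eq') (auto intro!: block_meas fT_meas)

lemma Ybar_eq: "sample_mean (Y i) (R i) = (\<lambda>\<omega>. (1 / real (R i)) * (\<Sum>k=1..R i. Y i k \<omega>))"
  by (simp add: fun_eq_iff sample_mean_def)

lemma Ybar_sqi: "i \<in> I \<Longrightarrow> sqi M (sample_mean (Y i) (R i))"
  unfolding Ybar_eq by (intro sqi_cmult sqi_sum) (auto intro: Ysqi)

lemma Ybar_mean: "i \<in> I \<Longrightarrow> expectation (sample_mean (Y i) (R i)) = expectation (X i)"
proof -
  assume i: "i \<in> I"
  have "expectation (sample_mean (Y i) (R i)) = (1 / real (R i)) * (\<Sum>k=1..R i. expectation (Y i k))"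
    unfolding Ybar_eq
    by (subst integral_mult_right_zero, subst Bochner_Integration.integral_sum)
       (use sqi_int[OF Ysqi[OF i]] in auto)
  also have "\<dots> = expectation (X i)" using Ymean[OF i] R1[OF i] by simp
  finally show ?thesis .
qed

lemma Ybar_var: "i \<in> I \<Longrightarrow> variance (sample_mean (Y i) (R i)) = variance (X i) / real (R i)"
proof -
  assume i: "i \<in> I"
  have "variance (sample_mean (Y i) (R i)) = (1 / real (R i))^2 * variance (\<lambda>\<omega>. \<Sum>k=1..R i. Y i k \<omega>)"
    unfolding Ybar_eq by (rule var_cmult)
  also have "variance (\<lambda>\<omega>. \<Sum>k=1..R i. Y i k \<omega>) = (\<Sum>k=1..R i. variance (Y i k))"
    by (rule var_sum) (auto intro: Ysqi i indep_YY)
  also have "\<dots> = real (R i) * variance (X i)" using Yvar[OF i] by simp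
  finally show ?thesis using R1[OF i] by (simp add: power2_eq_square)
qed

lemma W_sqi: "i \<in> I \<Longrightarrow> sqi M (W i)"
  unfolding W_def[abs_def] by (intro sqi_diff Xsqi Ybar_sqi)

lemma W_var: "i \<in> I \<Longrightarrow> variance (W i) = variance (X i) * (1 + 1 / real (R i))"
proof -
  assume i: "i \<in> I"
  define A where "A = {Inl i :: 'i + 'i \<times> nat}"
  define B where "B = (Inr ` ({i} \<times> {1..R i}) :: ('i + 'i \<times> nat) set)"
  have "indep_var borel (\<lambda>\<omega>. (\<lambda>h. h (Inl i)) (restrict (\<lambda>j. Z j \<omega>) A))
           borel (\<lambda>\<omega>. (\<lambda>h. (\<Sum>k=1..R i. h (Inr (i,k))) / real (R i)) (restrict (\<lambda>j. Z j \<omega>) B))"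
    by (rule indep_blocks[OF indep])
       (use i in \<open>auto simp: A_def B_def all_index_def intro!: borel_measurable_divide borel_measurable_sum measurable_component_singleton\<close>)
  moreover have "(\<lambda>\<omega>. (\<lambda>h. h (Inl i)) (restrict (\<lambda>j. Z j \<omega>) A)) = X i"
    by (simp add: A_def all_vars_def fun_eq_iff)
  moreover have "(\<lambda>\<omega>. (\<lambda>h. (\<Sum>k=1..R i. h (Inr (i,k))) / real (R i)) (restrict (\<lambda>j. Z j \<omega>) B))
      = sample_mean (Y i) (R i)"
    by (auto simp: B_def all_vars_def fun_eq_iff sample_mean_def intro!: sum.cong)
  ultimately have ind: "indep_var borel (X i) borel (sample_mean (Y i) (R i))" by simp
  have "variance (W i) = variance (X i) + variance (sample_mean (Y i) (R i))"
    unfolding W_def[abs_def] by (rule var_diff[OF ind Xsqi[OF i] Ybar_sqi[OF i]])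
  then show ?thesis using Ybar_var[OF i] by (simp add: algebra_simps)
qed

lemma T_mean: "i \<in> I \<Longrightarrow> expectation (T i) = variance (X i) * (1 + 1 / real (R i))"
proof -
  assume i: "i \<in> I"
  define \<mu> where "\<mu> = expectation (X i)"
  define r where "r = real (R i)"
  have r2: "r \<ge> 2" using R1[OF i] by (simp add: r_def)
  have sY: "\<And>k. k \<in> {1..R i} \<Longrightarrow> sqi M (\<lambda>\<omega>. Y i k \<omega> - \<mu>)"
    by (intro sqi_diff Ysqi sqi_const i) auto
  have sB: "sqi M (\<lambda>\<omega>. sample_mean (Y i) (R i) \<omega> - \<mu>)"
    by (intro sqi_diff Ybar_sqi sqi_const i)
  have iY: "\<And>k. k \<in> {1..R i} \<Longrightarrow> integrable M (\<lambda>\<omega>. (Y i k \<omega> - \<mu>)^2)"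
    using sY by (simp add: sqi_def)
  have iB: "integrable M (\<lambda>\<omega>. (sample_mean (Y i) (R i) \<omega> - \<mu>)^2)"
    using sB by (simp add: sqi_def)
  have "expectation (\<lambda>\<omega>. sample_var (Y i) (R i) \<omega>)
     = expectation (\<lambda>\<omega>. ((\<Sum>k=1..R i. (Y i k \<omega> - \<mu>)^2) - r * (sample_mean (Y i) (R i) \<omega> - \<mu>)^2) / (r - 1))"
    using sv_alt[OF R1[OF i], of "Y i" _ \<mu>] by (simp add: r_def)
  also have "\<dots> = ((\<Sum>k=1..R i. expectation (\<lambda>\<omega>. (Y i k \<omega> - \<mu>)^2))
                 - r * expectation (\<lambda>\<omega>. (sample_mean (Y i) (R i) \<omega> - \<mu>)^2)) / (r - 1)"
  proof -
    have i1: "integrable M (\<lambda>\<omega>. \<Sum>k=1..R i. (Y i k \<omega> - \<mu>)^2)"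
      by (intro Bochner_Integration.integrable_sum iY) auto
    show ?thesis
      by (subst integral_divide_zero, subst Bochner_Integration.integral_diff[OF i1 integrable_mult_right[OF iB]],
          subst Bochner_Integration.integral_sum) (use iY in auto)
  qed
  also have "(\<Sum>k=1..R i. expectation (\<lambda>\<omega>. (Y i k \<omega> - \<mu>)^2)) = r * variance (X i)"
    using Yc2[OF i] by (simp add: r_def \<mu>_def)
  also have "expectation (\<lambda>\<omega>. (sample_mean (Y i) (R i) \<omega> - \<mu>)^2) = variance (X i) / r"
    using Ybar_var[OF i] Ybar_mean[OF i] by (simp add: \<mu>_def r_def)
  also have "(r * variance (X i) - r * (variance (X i) / r)) / (r - 1) = variance (X i)"
    using r2 by (simp add: field_simps)
  finally have "expectation (\<lambda>\<omega>. sample_var (Y i) (R i) \<omega>) = variance (X i)" .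
  then show ?thesis unfolding T_def[abs_def] by (simp add: r_def)
qed


lemma T_bound: "i \<in> I \<Longrightarrow> (T i \<omega>)^2 \<le> (1 + 1 / real (R i))^2 * (real (R i) / (real (R i) - 1)^2 *
     (\<Sum>k=1..R i. (Y i k \<omega> - expectation (X i))^4))"
proof -
  assume i: "i \<in> I"
  have "(T i \<omega>)^2 = (1 + 1 / real (R i))^2 * (sample_var (Y i) (R i) \<omega>)^2"
    by (simp add: T_def power_mult_distrib)
  also have "\<dots> \<le> (1 + 1 / real (R i))^2 * (real (R i) / (real (R i) - 1)^2 *
     (\<Sum>k=1..R i. (Y i k \<omega> - expectation (X i))^4))"
    by (intro mult_left_mono sv_sq_bound R1 i) simp
  finally show ?thesis .
qed

lemma Y4c: "i \<in> I \<Longrightarrow> k \<in> {1..R i} \<Longrightarrow> integrable M (\<lambda>\<omega>. (Y i k \<omega> - c)^4)"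
  using L4(2)[OF Ymeas Y4] .

lemma T_sqi: "i \<in> I \<Longrightarrow> sqi M (T i)"
proof -
  assume i: "i \<in> I"
  show ?thesis unfolding sqi_def
  proof
    show "T i \<in> borel_measurable M" using Tmeas[OF i] .
    show "integrable M (\<lambda>\<omega>. (T i \<omega>)^2)"
    proof (rule Bochner_Integration.integrable_bound[where f="\<lambda>\<omega>. (1 + 1 / real (R i))^2 * (real (R i) / (real (R i) - 1)^2 *
     (\<Sum>k=1..R i. (Y i k \<omega> - expectation (X i))^4))"])
      show "integrable M (\<lambda>\<omega>. (1 + 1 / real (R i))^2 * (real (R i) / (real (R i) - 1)^2 *
     (\<Sum>k=1..R i. (Y i k \<omega> - expectation (X i))^4)))"
        by (intro integrable_mult_right Bochner_Integration.integrable_sum Y4c i) auto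
      show "(\<lambda>\<omega>. (T i \<omega>)^2) \<in> borel_measurable M" using Tmeas[OF i] by auto
      show "AE x in M. norm ((T i x)^2) \<le> norm ((1 + 1 / real (R i))^2 * (real (R i) / (real (R i) - 1)^2 *
     (\<Sum>k=1..R i. (Y i k x - expectation (X i))^4)))"
      proof (rule AE_I2)
        fix x
        have "(T i x)^2 \<le> (1 + 1 / real (R i))^2 * (real (R i) / (real (R i) - 1)^2 *
           (\<Sum>k=1..R i. (Y i k x - expectation (X i))^4))" by (rule T_bound[OF i])
        then show "norm ((T i x)^2) \<le> norm ((1 + 1 / real (R i))^2 * (real (R i) / (real (R i) - 1)^2 *
           (\<Sum>k=1..R i. (Y i k x - expectation (X i))^4)))"
          by (simp only: real_norm_def abs_power2)
      qed
    qed
  qed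
qed

lemma T_sq_mean: "i \<in> I \<Longrightarrow> expectation (\<lambda>\<omega>. (T i \<omega>)^2) \<le> 9 * (\<integral>\<omega>. (X i \<omega> - expectation (X i))^4 \<partial>M)"
proof -
  assume i: "i \<in> I"
  define r where "r = real (R i)"
  define m4 where "m4 = (\<integral>\<omega>. (X i \<omega> - expectation (X i))^4 \<partial>M)"
  have r2: "r \<ge> 2" using R1[OF i] by (simp add: r_def)
  have m4: "m4 \<ge> 0" unfolding m4_def by (rule integral_nonneg_AE) auto
  have iB: "integrable M (\<lambda>\<omega>. (1 + 1 / r)^2 * (r / (r - 1)^2 *
     (\<Sum>k=1..R i. (Y i k \<omega> - expectation (X i))^4)))"
    by (intro integrable_mult_right Bochner_Integration.integrable_sum Y4c i) auto
  have "expectation (\<lambda>\<omega>. (T i \<omega>)^2) \<le> expectation (\<lambda>\<omega>. (1 + 1 / r)^2 * (r / (r - 1)^2 *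
     (\<Sum>k=1..R i. (Y i k \<omega> - expectation (X i))^4)))"
    using T_sqi[OF i] iB T_bound[OF i] by (intro integral_mono) (auto simp: sqi_def r_def)
  also have "\<dots> = (1 + 1 / r)^2 * (r / (r - 1)^2 * (\<Sum>k=1..R i. m4))"
    by (subst integral_mult_right_zero, subst integral_mult_right_zero, subst Bochner_Integration.integral_sum)
       (use Y4c[OF i] Yc4[OF i] in \<open>auto simp: m4_def\<close>)
  also have "\<dots> = (1 + 1 / r)^2 * (r / (r - 1)^2 * (r * m4))"
    by (simp add: r_def)
  also have "\<dots> = ((1 + 1 / r) * r)^2 / (r - 1)^2 * m4"
    by (simp add: power2_eq_square)
  also have "(1 + 1 / r) * r = r + 1" using r2 by (simp add: field_simps)
  also have "(r + 1)^2 / (r - 1)^2 * m4 = ((r + 1) / (r - 1))^2 * m4" by (simp add: power_divide)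
  also have "\<dots> \<le> 3^2 * m4"
  proof (intro mult_right_mono m4 power_mono)
    show "(r + 1) / (r - 1) \<le> 3" using r2 by (simp add: field_simps)
    show "0 \<le> (r + 1) / (r - 1)" using r2 by simp
  qed
  finally show ?thesis by (simp add: m4_def)
qed

lemma T_var: "i \<in> I \<Longrightarrow> variance (T i) \<le> 9 * (\<integral>\<omega>. (X i \<omega> - expectation (X i))^4 \<partial>M)"
proof -
  assume i: "i \<in> I"
  have "variance (T i) = expectation (\<lambda>\<omega>. (T i \<omega>)^2) - (expectation (T i))^2"
    using T_sqi[OF i] sqi_int[OF T_sqi[OF i]] by (intro variance_eq) (auto simp: sqi_def)
  also have "\<dots> \<le> expectation (\<lambda>\<omega>. (T i \<omega>)^2)" by simp
  finally show ?thesis using T_sq_mean[OF i] by linarith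
qed

lemma main1: "expectation (var_estimator Y R I) = variance (centred_sum X Y R I)"
proof -
  have e1: "var_estimator Y R I = (\<lambda>\<omega>. \<Sum>i\<in>I. T i \<omega>)"
    by (simp add: fun_eq_iff var_estimator_def T_def)
  have e2: "centred_sum X Y R I = (\<lambda>\<omega>. \<Sum>i\<in>I. W i \<omega>)"
    by (simp add: fun_eq_iff centred_sum_def W_def sum_subtractf)
  have "expectation (var_estimator Y R I) = (\<Sum>i\<in>I. expectation (T i))"
    unfolding e1 by (rule Bochner_Integration.integral_sum) (use sqi_int T_sqi in auto)
  also have "\<dots> = (\<Sum>i\<in>I. variance (W i))"
    using T_mean W_var by simp
  also have "\<dots> = variance (centred_sum X Y R I)"
    unfolding e2 by (rule var_sum[symmetric]) (use fin W_sqi indep_W in auto)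
  finally show ?thesis .
qed

lemma main2: "variance (var_estimator Y R I) \<le> (\<Sum>i\<in>I. 9 * (\<integral>\<omega>. (X i \<omega> - expectation (X i))^4 \<partial>M))"
proof -
  have e1: "var_estimator Y R I = (\<lambda>\<omega>. \<Sum>i\<in>I. T i \<omega>)"
    by (simp add: fun_eq_iff var_estimator_def T_def)
  have "variance (var_estimator Y R I) = (\<Sum>i\<in>I. variance (T i))"
    unfolding e1 by (rule var_sum) (use fin T_sqi indep_T in auto)
  also have "\<dots> \<le> (\<Sum>i\<in>I. 9 * (\<integral>\<omega>. (X i \<omega> - expectation (X i))^4 \<partial>M))"
    by (rule sum_mono) (rule T_var)
  finally show ?thesis .
qed

end

lemma per_n:
  fixes M :: "'a measure" and I :: "'i set" and X :: "'i \<Rightarrow> 'a \<Rightarrow> real"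
    and Y :: "'i \<Rightarrow> nat \<Rightarrow> 'a \<Rightarrow> real" and R :: "'i \<Rightarrow> nat"
  assumes "prob_space M" "finite I" "\<And>i. i \<in> I \<Longrightarrow> integrable M (\<lambda>\<omega>. (X i \<omega>) ^ 4)"
    "\<And>i k. i \<in> I \<Longrightarrow> k \<in> {1..R i} \<Longrightarrow> distr M borel (Y i k) = distr M borel (X i)"
    "prob_space.indep_vars M (\<lambda>_. borel) (all_vars X Y) (all_index I R)"
    "\<And>i. i \<in> I \<Longrightarrow> R i \<ge> 2"
  shows "(\<integral>\<omega>. var_estimator Y R I \<omega> \<partial>M) = prob_space.variance M (centred_sum X Y R I)"
    "prob_space.variance M (var_estimator Y R I)
       \<le> (\<Sum>i\<in>I. 9 * (\<integral>\<omega>. (X i \<omega> - (\<integral>y. X i y \<partial>M))^4 \<partial>M))"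
proof -
  interpret setting M I X Y R using assms by (simp add: setting_def setting_axioms_def)
  show "(\<integral>\<omega>. var_estimator Y R I \<omega> \<partial>M) = prob_space.variance M (centred_sum X Y R I)"
    using main1 by simp
  show "prob_space.variance M (var_estimator Y R I)
       \<le> (\<Sum>i\<in>I. 9 * (\<integral>\<omega>. (X i \<omega> - (\<integral>y. X i y \<partial>M))^4 \<partial>M))"
    using main2 by simp
qed

theorem lemma2:
  fixes M :: "nat \<Rightarrow> 'a measure"
    and I :: "nat \<Rightarrow> 'i set"
    and X :: "nat \<Rightarrow> 'i \<Rightarrow> 'a \<Rightarrow> real"
    and Y :: "nat \<Rightarrow> 'i \<Rightarrow> nat \<Rightarrow> 'a \<Rightarrow> real"
    and R :: "nat \<Rightarrow> 'i \<Rightarrow> nat"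
    and \<kappa>max :: real
  assumes prob: "\<And>n. prob_space (M n)"
    and fin: "\<And>n. finite (I n)"
    and card_inf: "filterlim (\<lambda>n. card (I n)) at_top sequentially"
    and meas: "\<And>n i. i \<in> I n \<Longrightarrow> X n i \<in> borel_measurable (M n)"
    and fourth: "\<And>n i. i \<in> I n \<Longrightarrow> integrable (M n) (\<lambda>\<omega>. (X n i \<omega>) ^ 4)"
    and var_pos: "\<And>n i. i \<in> I n \<Longrightarrow> prob_space.variance (M n) (X n i) > 0"
    and copies: "\<And>n i k. i \<in> I n \<Longrightarrow> k \<in> {1..R n i} \<Longrightarrow>
                   distr (M n) borel (Y n i k) = distr (M n) borel (X n i)"
    and indep: "\<And>n. prob_space.indep_vars (M n) (\<lambda>_. borel) (all_vars (X n) (Y n)) (all_index (I n) (R n))"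
    and R1: "\<And>n i. i \<in> I n \<Longrightarrow> R n i \<ge> 2"
    and R2: "\<And>n i. i \<in> I n \<Longrightarrow> kurtosis (M n) (X n i) \<le> \<kappa>max"
    and R3: "\<exists>B. eventually (\<lambda>n. \<bar>gamma2 (M n) (X n) (I n)\<bar> \<le> B) sequentially"
  shows "(\<forall>n. (\<integral>\<omega>. var_estimator (Y n) (R n) (I n) \<omega> \<partial>M n)
              = prob_space.variance (M n) (centred_sum (X n) (Y n) (R n) (I n)))
         \<and> (\<lambda>n. prob_space.variance (M n) (var_estimator (Y n) (R n) (I n)))
              \<in> O(\<lambda>n. real (card (I n)) * (sigma_bar2 (M n) (X n) (I n)) ^ 2)"
proof
  note P = per_n[OF prob fin fourth copies indep R1]
  show "\<forall>n. (\<integral>\<omega>. var_estimator (Y n) (R n) (I n) \<omega> \<partial>M n)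
              = prob_space.variance (M n) (centred_sum (X n) (Y n) (R n) (I n))"
    using P(1) by blast
  obtain B where B: "eventually (\<lambda>n. \<bar>gamma2 (M n) (X n) (I n)\<bar> \<le> B) sequentially"
    using R3 by blast
  define s2 where "s2 n i = prob_space.variance (M n) (X n i)" for n i
  define V where "V n = prob_space.variance (M n) (var_estimator (Y n) (R n) (I n))" for n
  define G where "G n = real (card (I n)) * (sigma_bar2 (M n) (X n) (I n)) ^ 2" for n
  have Vnn: "V n \<ge> 0" for n unfolding V_def by (rule integral_nonneg_AE) auto
  have Gnn: "G n \<ge> 0" for n unfolding G_def by simp
  have V1: "V n \<le> 9 * \<kappa>max * (\<Sum>i\<in>I n. (s2 n i)^2)" for n
  proof -
    have "V n \<le> (\<Sum>i\<in>I n. 9 * (\<integral>\<omega>. (X n i \<omega> - (\<integral>y. X n i y \<partial>M n))^4 \<partial>M n))"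
      unfolding V_def by (rule P(2))
    also have "\<dots> \<le> (\<Sum>i\<in>I n. 9 * \<kappa>max * (s2 n i)^2)"
    proof (rule sum_mono)
      fix i assume i: "i \<in> I n"
      have sp: "(s2 n i)^2 > 0" using var_pos[OF i] by (simp add: s2_def)
      have "(\<integral>\<omega>. (X n i \<omega> - (\<integral>y. X n i y \<partial>M n))^4 \<partial>M n) = kurtosis (M n) (X n i) * (s2 n i)^2"
        using sp by (simp add: kurtosis_def s2_def)
      also have "\<dots> \<le> \<kappa>max * (s2 n i)^2"
        using R2[OF i] sp by (intro mult_right_mono) auto
      finally show "9 * (\<integral>\<omega>. (X n i \<omega> - (\<integral>y. X n i y \<partial>M n))^4 \<partial>M n) \<le> 9 * \<kappa>max * (s2 n i)^2"
        by simp
    qed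
    also have "\<dots> = 9 * \<kappa>max * (\<Sum>i\<in>I n. (s2 n i)^2)" by (simp add: sum_distrib_left)
    finally show ?thesis .
  qed
  have V2: "V n \<le> 9 * \<bar>\<kappa>max\<bar> * (\<Sum>i\<in>I n. (s2 n i)^2)" for n
  proof -
    have "0 \<le> (\<Sum>i\<in>I n. (s2 n i)^2)" by (intro sum_nonneg) simp
    then have "9 * \<kappa>max * (\<Sum>i\<in>I n. (s2 n i)^2) \<le> 9 * \<bar>\<kappa>max\<bar> * (\<Sum>i\<in>I n. (s2 n i)^2)"
      by (intro mult_right_mono) auto
    then show ?thesis using V1[of n] by linarith
  qed
  have S: "(\<Sum>i\<in>I n. (s2 n i)^2) \<le> (\<bar>B\<bar> + 1) * G n"
    if g: "\<bar>gamma2 (M n) (X n) (I n)\<bar> \<le> B" for n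
  proof (cases "I n = {}")
    case True then show ?thesis by (simp add: G_def)
  next
    case False
    define c where "c = real (card (I n))"
    have c0: "c > 0" using False fin[of n] by (simp add: c_def card_gt_0_iff)
    define sb where "sb = sigma_bar2 (M n) (X n) (I n)"
    have sb0: "sb > 0" unfolding sb_def sigma_bar2_def
      using c0 False fin[of n] var_pos[of _ n] by (intro divide_pos_pos sum_pos) (auto simp: c_def)
    define Q where "Q = (\<Sum>i\<in>I n. (s2 n i)^2)"
    have gdef: "gamma2 (M n) (X n) (I n) = (Q / c - sb^2) / sb^2"
      by (simp add: gamma2_def Q_def s2_def c_def sb_def)
    have s0: "sb^2 > 0" using sb0 by simp
    have "gamma2 (M n) (X n) (I n) \<le> \<bar>B\<bar>" using g by linarith
    then have "(Q / c - sb^2) / sb^2 \<le> \<bar>B\<bar>" using gdef by simp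
    then have "Q / c - sb^2 \<le> \<bar>B\<bar> * sb^2" using s0 by (simp add: divide_le_eq)
    then have "Q / c \<le> (\<bar>B\<bar> + 1) * sb^2" by (simp add: algebra_simps)
    then have "Q \<le> (\<bar>B\<bar> + 1) * sb^2 * c" using c0 by (simp add: divide_le_eq)
    then show ?thesis by (simp add: Q_def G_def c_def sb_def algebra_simps)
  qed
  have "eventually (\<lambda>n. norm (V n) \<le> (9 * \<bar>\<kappa>max\<bar> * (\<bar>B\<bar> + 1)) * norm (G n)) sequentially"
    using B
  proof (rule eventually_mono)
    fix n assume g: "\<bar>gamma2 (M n) (X n) (I n)\<bar> \<le> B"
    have "V n \<le> 9 * \<bar>\<kappa>max\<bar> * ((\<bar>B\<bar> + 1) * G n)"
    proof -
      have "9 * \<bar>\<kappa>max\<bar> * (\<Sum>i\<in>I n. (s2 n i)^2) \<le> 9 * \<bar>\<kappa>max\<bar> * ((\<bar>B\<bar> + 1) * G n)"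
        using S[OF g] by (intro mult_left_mono) auto
      then show ?thesis using V2[of n] by linarith
    qed
    then show "norm (V n) \<le> (9 * \<bar>\<kappa>max\<bar> * (\<bar>B\<bar> + 1)) * norm (G n)"
      using Vnn[of n] Gnn[of n] by (simp add: mult.assoc)
  qed
  then show "(\<lambda>n. prob_space.variance (M n) (var_estimator (Y n) (R n) (I n)))
              \<in> O(\<lambda>n. real (card (I n)) * (sigma_bar2 (M n) (X n) (I n)) ^ 2)"
    unfolding V_def[symmetric] G_def[symmetric] by (intro bigoI) simp
qed

end
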